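(* Let $h:\{0,1\}^n\to\{\pm1\}$ be such that $(1-h)/2$ is monotone. Then for every $0\le r\le n-1$, $\mu(h|_{r+1})\ge\mu(h|_r)+\frac1n\mathbf I[h|_r]$, and consequently $\frac1n\sum_{r=0}^{n-1}\mathbf I[h|_r]\le\mu(h|_n)-\mu(h|_0)\le1$.
   Context: A function $g:\{0,1\}^n\to\{0,1\}$ is monotone if $x\preceq y$ coordinatewise implies $g(x)\le g(y)$. For $0\le r\le n$, $\binom{[n]}{r}=\{x\in\{0,1\}^n:\sum_ix_i=r\}$ with the uniform distribution; $h|_r$ is the restriction of $h$ to it, and $\mu(h|_r)=|\{x\in\binom{[n]}{r}:h(x)=-1\}|/\binom nr$. For $g:\binom{[n]}{r}\to\{\pm1\}$, $\mathbf I_{ij}[g]=2\Pr_x[g(x^{(i,j)})\ne g(x)]$ with $x^{(i,j)}$ obtained by swapping coordinates $i,j$, and $\mathbf I[g]=\frac1n\sum_{1\le i<j\le n}\mathbf I_{ij}[g]$. *)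

theory Defs
  imports Complex_Main
begin

text \<open>Points of the cube {0,1}^n are encoded as functions nat => bool that are
  False outside the coordinates 0..n-1 (True = 1).\<close>

definition cube :: "nat \<Rightarrow> (nat \<Rightarrow> bool) set" where
  "cube n = {x. \<forall>i. n \<le> i \<longrightarrow> \<not> x i}"

definition slice :: "nat \<Rightarrow> nat \<Rightarrow> (nat \<Rightarrow> bool) set" where
  "slice n r = {x \<in> cube n. card {i. i < n \<and> x i} = r}"

definition monotone_bool :: "nat \<Rightarrow> ((nat \<Rightarrow> bool) \<Rightarrow> real) \<Rightarrow> bool" where
  "monotone_bool n g \<longleftrightarrow>
     (\<forall>x\<in>cube n. \<forall>y\<in>cube n. (\<forall>i<n. x i \<longrightarrow> y i) \<longrightarrow> g x \<le> g y)"

definition slice_mu :: "nat \<Rightarrow> ((nat \<Rightarrow> bool) \<Rightarrow> real) \<Rightarrow> nat \<Rightarrow> real" where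
  "slice_mu n h r = real (card {x \<in> slice n r. h x = -1}) / real (n choose r)"

definition swap_coords :: "nat \<Rightarrow> nat \<Rightarrow> (nat \<Rightarrow> bool) \<Rightarrow> (nat \<Rightarrow> bool)" where
  "swap_coords i j x = x(i := x j, j := x i)"

definition slice_infl_ij :: "nat \<Rightarrow> ((nat \<Rightarrow> bool) \<Rightarrow> real) \<Rightarrow> nat \<Rightarrow> nat \<Rightarrow> nat \<Rightarrow> real" where
  "slice_infl_ij n h r i j =
     2 * real (card {x \<in> slice n r. h (swap_coords i j x) \<noteq> h x}) / real (card (slice n r))"

text \<open>I[h|_r] = (1/n) sum_{1<=i<j<=n} I_ij[h|_r] (coordinates indexed 0..n-1 here)\<close>
definition slice_infl :: "nat \<Rightarrow> ((nat \<Rightarrow> bool) \<Rightarrow> real) \<Rightarrow> nat \<Rightarrow> real" where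
  "slice_infl n h r = (1 / real n) * (\<Sum>j<n. \<Sum>i<j. slice_infl_ij n h r i j)"

end

theory Submission
  imports Defs
begin

lemma cube_eq: "cube n = (\<lambda>A i. i \<in> A) ` Pow {..<n}"
proof
  show "cube n \<subseteq> (\<lambda>A i. i \<in> A) ` Pow {..<n}"
  proof
    fix x assume x: "x \<in> cube n"
    have "x = (\<lambda>i. i \<in> {i. i < n \<and> x i})" using x by (intro ext) (metis cube_def mem_Collect_eq not_less)
    moreover have "{i. i < n \<and> x i} \<in> Pow {..<n}" by auto
    ultimately show "x \<in> (\<lambda>A i. i \<in> A) ` Pow {..<n}" by blast
  qed
qed (auto simp: cube_def)

lemma finite_cube: "finite (cube n)"
  by (simp add: cube_eq)

lemma finite_slice: "finite (slice n r)"
  using finite_cube[of n] by (simp add: slice_def)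

lemma card_slice: "card (slice n r) = n choose r"
proof -
  have eq: "slice n r = (\<lambda>A i. i \<in> A) ` {A. A \<subseteq> {..<n} \<and> card A = r}"
  proof
    show "slice n r \<subseteq> (\<lambda>A i. i \<in> A) ` {A. A \<subseteq> {..<n} \<and> card A = r}"
    proof
      fix x assume x: "x \<in> slice n r"
      have "x = (\<lambda>i. i \<in> {i. i < n \<and> x i})" using x by (intro ext) (metis (no_types, lifting) slice_def cube_def mem_Collect_eq not_less)
      moreover have "{i. i < n \<and> x i} \<in> {A. A \<subseteq> {..<n} \<and> card A = r}" using x by (auto simp: slice_def)
      ultimately show "x \<in> (\<lambda>A i. i \<in> A) ` {A. A \<subseteq> {..<n} \<and> card A = r}" by blast
    qed
  next
    show "(\<lambda>A i. i \<in> A) ` {A. A \<subseteq> {..<n} \<and> card A = r} \<subseteq> slice n r"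
    proof
      fix x assume "x \<in> (\<lambda>A i. i \<in> A) ` {A. A \<subseteq> {..<n} \<and> card A = r}"
      then obtain A where A: "A \<subseteq> {..<n}" "card A = r" and x: "x = (\<lambda>i. i \<in> A)" by auto
      have "{i. i < n \<and> x i} = A" using A x by auto
      then show "x \<in> slice n r" using A x by (auto simp: slice_def cube_def)
    qed
  qed
  have inj: "inj_on (\<lambda>A i. i \<in> A) {A. A \<subseteq> {..<n} \<and> card A = r}"
    by (rule inj_onI) (metis Collect_mem_eq)
  show ?thesis unfolding eq card_image[OF inj] using n_subsets[of "{..<n}" r] by simp
qed

definition tr :: "nat \<Rightarrow> nat \<Rightarrow> nat \<Rightarrow> nat" where
  "tr i j k = (if k = i then j else if k = j then i else k)"

lemma swap_invol: "swap_coords i j (swap_coords i j x) = x"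
  by (auto simp: swap_coords_def)

lemma swap_slice: assumes "i < n" "j < n" "x \<in> slice n r" shows "swap_coords i j x \<in> slice n r"
proof -
  have e: "{k. k < n \<and> swap_coords i j x k} = tr i j ` {k. k < n \<and> x k}"
    using assms(1,2) by (auto simp: swap_coords_def tr_def image_iff)
  have inj: "inj (tr i j)" by (rule injI) (auto simp: tr_def split: if_splits)
  have "card {k. k < n \<and> swap_coords i j x k} = card {k. k < n \<and> x k}"
    unfolding e by (rule card_image) (rule inj_on_subset[OF inj], simp)
  then show ?thesis using assms by (auto simp: slice_def cube_def swap_coords_def)
qed


lemma upd_slice: assumes "x \<in> slice n r" "a < n" "\<not> x a"
  shows "x(a := True) \<in> slice n (Suc r)"
proof -
  have "{i. i < n \<and> (x(a := True)) i} = insert a {i. i < n \<and> x i}" using assms by auto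
  then show ?thesis using assms by (auto simp: slice_def cube_def)
qed

lemma dn_slice: assumes "y \<in> slice n (Suc r)" "a < n" "y a"
  shows "y(a := False) \<in> slice n r"
proof -
  have "{i. i < n \<and> y i} = insert a {i. i < n \<and> (y(a := False)) i}" using assms by auto
  moreover have "finite {i. i < n \<and> (y(a := False)) i}" by auto
  ultimately have "Suc (card {i. i < n \<and> (y(a := False)) i}) = Suc r"
    using assms by (auto simp: slice_def)
  then show ?thesis using assms by (auto simp: slice_def cube_def)
qed

lemma card_ones: "x \<in> slice n r \<Longrightarrow> card {b. b < n \<and> x b} = r"
  by (simp add: slice_def)

lemma card_zeros: "x \<in> slice n r \<Longrightarrow> card {b. b < n \<and> \<not> x b} = n - r"
proof -
  assume x: "x \<in> slice n r"
  have "{b. b < n \<and> \<not> x b} = {..<n} - {b. b < n \<and> x b}" by auto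
  then show ?thesis using x card_Diff_subset[of "{b. b < n \<and> x b}" "{..<n}"] by (auto simp: slice_def)
qed

locale setting =
  fixes n :: nat and h :: "(nat \<Rightarrow> bool) \<Rightarrow> real"
  assumes pm1: "\<forall>x\<in>cube n. h x = 1 \<or> h x = -1"
    and mono: "monotone_bool n (\<lambda>x. (1 - h x) / 2)"
begin

lemma monoF: assumes "x \<in> cube n" "y \<in> cube n" "\<forall>k<n. x k \<longrightarrow> y k" "h x = -1"
  shows "h y = -1"
proof -
  have "(1 - h x) / 2 \<le> (1 - h y) / 2" using mono assms unfolding monotone_bool_def by blast
  then show ?thesis using assms pm1 by force
qed

definition Bset :: "nat \<Rightarrow> ((nat \<Rightarrow> bool) \<times> nat) set" where
  "Bset r = {(x,a). x \<in> slice n r \<and> a < n \<and> \<not> x a \<and> h x \<noteq> -1 \<and> h (x(a := True)) = -1}"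

lemma finite_Bset: "finite (Bset r)"
proof -
  have "Bset r \<subseteq> slice n r \<times> {..<n}" by (auto simp: Bset_def)
  then show ?thesis using finite_slice[of n r] by (meson finite_SigmaI finite_lessThan finite_subset)
qed

lemma up_card:
  "card (Bset r) + (n - r) * card {x \<in> slice n r. h x = -1}
     = Suc r * card {y \<in> slice n (Suc r). h y = -1}"
proof -
  define E1 where "E1 = {(x,a). x \<in> slice n r \<and> a < n \<and> \<not> x a \<and> h (x(a := True)) = -1}"
  define E0 where "E0 = {(x,a). x \<in> slice n r \<and> a < n \<and> \<not> x a \<and> h x = -1}"
  define Y where "Y = {(y,a). y \<in> slice n (Suc r) \<and> a < n \<and> y a \<and> h y = -1}"
  have fin1: "finite E1"
    by (rule finite_subset[of _ "slice n r \<times> {..<n}"]) (auto simp: E1_def finite_slice)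
  have fin0: "finite E0"
    by (rule finite_subset[of _ "slice n r \<times> {..<n}"]) (auto simp: E0_def finite_slice)
  have split: "E1 = Bset r \<union> E0"
  proof
    show "E1 \<subseteq> Bset r \<union> E0" by (auto simp: E1_def E0_def Bset_def)
    show "Bset r \<union> E0 \<subseteq> E1"
    proof
      fix p assume p: "p \<in> Bset r \<union> E0"
      obtain x a where pa: "p = (x,a)" by (cases p)
      show "p \<in> E1"
      proof (cases "p \<in> Bset r")
        case True then show ?thesis by (auto simp: pa Bset_def E1_def)
      next
        case False
        then have e: "x \<in> slice n r" "a < n" "\<not> x a" "h x = -1" using p by (auto simp: pa E0_def)
        have "x(a := True) \<in> slice n (Suc r)" using upd_slice e by blast
        then have "h (x(a := True)) = -1"
          using monoF[of x "x(a:=True)"] e by (auto simp: slice_def)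
        then show ?thesis using e by (auto simp: pa E1_def)
      qed
    qed
  qed
  have disj: "Bset r \<inter> E0 = {}" by (auto simp: Bset_def E0_def)
  have c1: "card E1 = card (Bset r) + card E0"
    using split disj finite_Bset fin0 by (simp add: card_Un_disjoint)
  have "bij_betw (\<lambda>(x,a). (x(a := True), a)) E1 Y"
  proof (rule bij_betw_byWitness[where f' = "\<lambda>(y,a). (y(a := False), a)"])
    show "\<forall>p\<in>E1. (\<lambda>(y,a). (y(a := False), a)) ((\<lambda>(x,a). (x(a := True), a)) p) = p"
      by (auto simp: E1_def fun_upd_idem)
    show "\<forall>p\<in>Y. (\<lambda>(x,a). (x(a := True), a)) ((\<lambda>(y,a). (y(a := False), a)) p) = p"
      by (auto simp: Y_def fun_upd_idem)
    show "(\<lambda>(x,a). (x(a := True), a)) ` E1 \<subseteq> Y"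
      using upd_slice by (fastforce simp: E1_def Y_def)
    show "(\<lambda>(y,a). (y(a := False), a)) ` Y \<subseteq> E1"
    proof
      fix q assume "q \<in> (\<lambda>(y,a). (y(a := False), a)) ` Y"
      then obtain y a where ya: "y \<in> slice n (Suc r)" "a < n" "y a" "h y = -1"
        and q: "q = (y(a := False), a)" by (auto simp: Y_def)
      have "y(a := False, a := True) = y" using ya by (auto simp: fun_upd_idem)
      then show "q \<in> E1" using ya dn_slice[OF ya(1-3)] by (auto simp: q E1_def)
    qed
  qed
  then have c2: "card E1 = card Y" by (rule bij_betw_same_card)
  have "Y = Sigma {y \<in> slice n (Suc r). h y = -1} (\<lambda>y. {a. a < n \<and> y a})"
    by (auto simp: Y_def)
  then have "card Y = (\<Sum>y\<in>{y \<in> slice n (Suc r). h y = -1}. card {a. a < n \<and> y a})"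
    using finite_slice[of n "Suc r"] by (simp add: card_SigmaI)
  also have "\<dots> = (\<Sum>y\<in>{y \<in> slice n (Suc r). h y = -1}. Suc r)"
    by (rule sum.cong) (auto simp: card_ones)
  finally have c3: "card Y = Suc r * card {y \<in> slice n (Suc r). h y = -1}" by simp
  have "E0 = Sigma {x \<in> slice n r. h x = -1} (\<lambda>x. {a. a < n \<and> \<not> x a})"
    by (auto simp: E0_def)
  then have "card E0 = (\<Sum>x\<in>{x \<in> slice n r. h x = -1}. card {a. a < n \<and> \<not> x a})"
    using finite_slice[of n r] by (simp add: card_SigmaI)
  also have "\<dots> = (\<Sum>x\<in>{x \<in> slice n r. h x = -1}. n - r)"
    by (rule sum.cong) (auto simp: card_zeros)
  finally have c4: "card E0 = (n - r) * card {x \<in> slice n r. h x = -1}" by simp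
  show ?thesis using c1 c2 c3 c4 by simp
qed


definition Aset :: "nat \<Rightarrow> nat \<Rightarrow> nat \<Rightarrow> (nat \<Rightarrow> bool) set" where
  "Aset r i j = {x \<in> slice n r. h x \<noteq> -1 \<and> h (swap_coords i j x) = -1}"

lemma diff_card: assumes "i < n" "j < n"
  shows "card {x \<in> slice n r. h (swap_coords i j x) \<noteq> h x} = 2 * card (Aset r i j)"
proof -
  define B where "B = {x \<in> slice n r. h x = -1 \<and> h (swap_coords i j x) \<noteq> -1}"
  have inS: "x \<in> slice n r \<Longrightarrow> swap_coords i j x \<in> slice n r" for x
    using swap_slice assms by blast
  have pmx: "x \<in> slice n r \<Longrightarrow> h x = 1 \<or> h x = -1" for x using pm1 by (auto simp: slice_def)
  have eq: "{x \<in> slice n r. h (swap_coords i j x) \<noteq> h x} = Aset r i j \<union> B"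
  proof safe
    fix x assume "x \<in> slice n r" "h (swap_coords i j x) \<noteq> h x" "x \<notin> B"
    then show "x \<in> Aset r i j" using pmx[of x] pmx[OF inS, of x] by (auto simp: Aset_def B_def)
  qed (auto simp: Aset_def B_def)
  have disj: "Aset r i j \<inter> B = {}" by (auto simp: Aset_def B_def)
  have finA: "finite (Aset r i j)" using finite_slice[of n r] by (simp add: Aset_def)
  have finB: "finite B" using finite_slice[of n r] by (simp add: B_def)
  have "bij_betw (swap_coords i j) (Aset r i j) B"
    by (rule bij_betw_byWitness[where f' = "swap_coords i j"])
      (auto simp: Aset_def B_def swap_invol inS)
  then have "card (Aset r i j) = card B" by (rule bij_betw_same_card)
  then show ?thesis unfolding eq using disj finA finB by (simp add: card_Un_disjoint)
qed

lemma pair_bound: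
  "card (Sigma {..<n} (\<lambda>j. Sigma {..<j} (\<lambda>i. Aset r i j))) \<le> r * card (Bset r)"
proof -
  define T where "T = Sigma (Bset r) (\<lambda>(x,a). {b. b < n \<and> x b})"
  define g where "g = (\<lambda>(j::nat, i::nat, x::nat\<Rightarrow>bool).
     ((x, if x i then j else i), if x i then i else j))"
  have finT: "finite T" unfolding T_def using finite_Bset by auto
  have "card T = (\<Sum>p\<in>Bset r. card ((\<lambda>(x,a). {b. b < n \<and> x b}) p))"
    unfolding T_def by (rule card_SigmaI) (auto simp: finite_Bset)
  also have "\<dots> = (\<Sum>p\<in>Bset r. r)"
    by (rule sum.cong) (auto simp: Bset_def card_ones)
  finally have cT: "card T = r * card (Bset r)" by simp
  have key: "x i \<noteq> x j" if "x \<in> Aset r i j" for x i j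
  proof
    assume "x i = x j"
    then have "swap_coords i j x = x" by (intro ext) (auto simp: swap_coords_def)
    then show False using that by (auto simp: Aset_def)
  qed
  have sub: "g ` Sigma {..<n} (\<lambda>j. Sigma {..<j} (\<lambda>i. Aset r i j)) \<subseteq> T"
  proof
    fix q assume "q \<in> g ` Sigma {..<n} (\<lambda>j. Sigma {..<j} (\<lambda>i. Aset r i j))"
    then obtain j i x where jn: "j < n" and ij: "i < j" and xA: "x \<in> Aset r i j"
      and q: "q = g (j, i, x)" by auto
    have xS: "x \<in> slice n r" and hx: "h x \<noteq> -1" and hs: "h (swap_coords i j x) = -1"
      using xA by (auto simp: Aset_def)
    have ne: "x i \<noteq> x j" using key[OF xA] .
    have sS: "swap_coords i j x \<in> slice n r" using swap_slice[OF _ jn xS] ij jn by simp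
    show "q \<in> T"
    proof (cases "x i")
      case True
      then have nj: "\<not> x j" using ne by simp
      have uS: "x(j := True) \<in> slice n (Suc r)" using upd_slice[OF xS jn nj] .
      have "h (x(j := True)) = -1"
        apply (rule monoF[OF _ _ _ hs])
        using sS uS True by (auto simp: slice_def swap_coords_def)
      then show ?thesis using True nj xS jn hx ij by (auto simp: q g_def T_def Bset_def)
    next
      case False
      then have nj: "x j" using ne by simp
      have iN: "i < n" using ij jn by simp
      have uS: "x(i := True) \<in> slice n (Suc r)" using upd_slice[OF xS iN False] .
      have "h (x(i := True)) = -1"
        apply (rule monoF[OF _ _ _ hs])
        using sS uS False by (auto simp: slice_def swap_coords_def)
      then show ?thesis using False nj xS jn iN hx by (auto simp: q g_def T_def Bset_def)
    qed
  qed
  have inj: "inj_on g (Sigma {..<n} (\<lambda>j. Sigma {..<j} (\<lambda>i. Aset r i j)))"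
  proof (rule inj_onI)
    fix p p' assume p: "p \<in> Sigma {..<n} (\<lambda>j. Sigma {..<j} (\<lambda>i. Aset r i j))"
      and p': "p' \<in> Sigma {..<n} (\<lambda>j. Sigma {..<j} (\<lambda>i. Aset r i j))" and e: "g p = g p'"
    obtain j i x where pp: "p = (j,i,x)" by (cases p) auto
    obtain j' i' x' where pp': "p' = (j',i',x')" by (cases p') auto
    have ij: "i < j" "i' < j'" using p p' pp pp' by auto
    have n1: "x i \<noteq> x j" using key p pp by auto
    have n2: "x' i' \<noteq> x' j'" using key p' pp' by auto
    have xx: "x = x'" using e pp pp' by (auto simp: g_def)
    show "p = p'" using e ij n1 n2 xx unfolding pp pp' g_def
      by (auto split: if_splits)
  qed
  have "card (Sigma {..<n} (\<lambda>j. Sigma {..<j} (\<lambda>i. Aset r i j))) \<le> card T"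
    using card_inj_on_le[OF inj sub finT] .
  then show ?thesis using cT by simp
qed


lemma infl_eq:
  "slice_infl n h r = 4 * real (card (Sigma {..<n} (\<lambda>j. Sigma {..<j} (\<lambda>i. Aset r i j))))
      / (real n * real (n choose r))"
proof -
  have finA: "finite (Aset r i j)" for i j using finite_slice[of n r] by (simp add: Aset_def)
  have cD: "card (Sigma {..<n} (\<lambda>j. Sigma {..<j} (\<lambda>i. Aset r i j)))
      = (\<Sum>j<n. \<Sum>i<j. card (Aset r i j))"
    using finA by (simp add: card_SigmaI)
  have "(\<Sum>j<n. \<Sum>i<j. slice_infl_ij n h r i j)
      = (\<Sum>j<n. \<Sum>i<j. 4 * real (card (Aset r i j)) / real (n choose r))"
  proof (rule sum.cong[OF refl], rule sum.cong[OF refl])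
    fix j i assume "j \<in> {..<n}" "i \<in> {..<j}"
    then have "i < n" "j < n" by auto
    then show "slice_infl_ij n h r i j = 4 * real (card (Aset r i j)) / real (n choose r)"
      unfolding slice_infl_ij_def diff_card[OF \<open>i<n\<close> \<open>j<n\<close>] card_slice by simp
  qed
  also have "\<dots> = 4 * real (\<Sum>j<n. \<Sum>i<j. card (Aset r i j)) / real (n choose r)"
    by (simp add: sum_divide_distrib sum_distrib_left)
  finally show ?thesis unfolding slice_infl_def cD by simp
qed

lemma step: assumes "r < n"
  shows "slice_mu n h (r + 1) \<ge> slice_mu n h r + (1 / real n) * slice_infl n h r"
proof -
  define C where "C = real (n choose r)"
  define C1 where "C1 = real (n choose Suc r)"
  define A0 where "A0 = real (card {x \<in> slice n r. h x = -1})"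
  define A1 where "A1 = real (card {x \<in> slice n (Suc r). h x = -1})"
  define B where "B = real (card (Bset r))"
  define D where "D = real (card (Sigma {..<n} (\<lambda>j. Sigma {..<j} (\<lambda>i. Aset r i j))))"
  have Cpos: "C > 0" using assms by (simp add: C_def)
  have npos: "real n > 0" using assms by simp
  have nr: "real (n - r) > 0" using assms by simp
  have cc: "real (n - r) * C = real (Suc r) * C1"
    unfolding C_def C1_def of_nat_mult[symmetric] binomial_absorb_comp binomial_absorption ..
  have C1pos: "C1 > 0" using cc Cpos nr
    by (metis mult_pos_pos of_nat_0_less_iff zero_less_Suc zero_less_mult_pos)
  have ub: "B + real (n - r) * A0 = real (Suc r) * A1"
    unfolding B_def A0_def A1_def of_nat_mult[symmetric] of_nat_add[symmetric] using up_card by simp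
  have DB: "D \<le> real r * B" unfolding D_def B_def using pair_bound[of r]
    by (metis of_nat_le_iff of_nat_mult)
  have B0: "B \<ge> 0" by (simp add: B_def)
  have mu1: "slice_mu n h (r + 1) = A1 / C1" by (simp add: slice_mu_def A1_def C1_def)
  have mu0: "slice_mu n h r = A0 / C" by (simp add: slice_mu_def A0_def C_def)
  have inf: "slice_infl n h r = 4 * D / (real n * C)" by (simp add: infl_eq D_def C_def)
  have diff: "A1 / C1 - A0 / C = B / (real (n - r) * C)"
  proof -
    have "real (Suc r) * A1 / (real (n - r) * C) = real (Suc r) * A1 / (real (Suc r) * C1)"
      using cc by simp
    also have "\<dots> = A1 / C1" by simp
    finally have "A1 / C1 = real (Suc r) * A1 / (real (n - r) * C)" by simp
    moreover have "A0 / C = real (n - r) * A0 / (real (n - r) * C)" using nr by simp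
    ultimately have "A1 / C1 - A0 / C = (real (Suc r) * A1 - real (n - r) * A0) / (real (n - r) * C)"
      by (simp add: diff_divide_distrib)
    also have "real (Suc r) * A1 - real (n - r) * A0 = B" using ub by linarith
    finally show ?thesis .
  qed
  have amgm: "4 * real r * real (n - r) \<le> real n * real n"
  proof -
    have "real (n - r) = real n - real r" using assms by simp
    moreover have "0 \<le> (real n - 2 * real r)^2" by simp
    ultimately show ?thesis by (simp add: power2_eq_square algebra_simps)
  qed
  have "4 * D * real (n - r) \<le> 4 * real r * B * real (n - r)"
    using DB nr by (simp add: mult_right_mono)
  also have "\<dots> = (4 * real r * real (n - r)) * B" by simp
  also have "\<dots> \<le> (real n * real n) * B" using amgm B0 by (rule mult_right_mono)
  finally have key: "4 * D * real (n - r) \<le> real n * real n * B" .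
  define M where "M = real n * real n * real (n - r) * C"
  have Mpos: "M > 0" using npos nr Cpos by (simp add: M_def)
  have e1: "(1 / real n) * (4 * D / (real n * C)) = (4 * D * real (n - r)) / M"
    using npos nr Cpos by (simp add: M_def)
  have e2: "B / (real (n - r) * C) = (real n * real n * B) / M"
    using npos nr Cpos by (simp add: M_def)
  have "(1 / real n) * (4 * D / (real n * C)) \<le> B / (real (n - r) * C)"
    unfolding e1 e2 using key Mpos by (simp add: divide_right_mono)
  then show ?thesis using diff mu1 mu0 inf by simp
qed

end
theorem mainTheorem6:
  fixes n :: nat and h :: "(nat \<Rightarrow> bool) \<Rightarrow> real"
  assumes pm1: "\<forall>x\<in>cube n. h x = 1 \<or> h x = -1"
    and mono: "monotone_bool n (\<lambda>x. (1 - h x) / 2)"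
  shows "(\<forall>r<n. slice_mu n h (r + 1) \<ge> slice_mu n h r + (1 / real n) * slice_infl n h r)
    \<and> (1 / real n) * (\<Sum>r<n. slice_infl n h r) \<le> slice_mu n h n - slice_mu n h 0
    \<and> slice_mu n h n - slice_mu n h 0 \<le> 1"
proof -
  interpret setting n h using pm1 mono by unfold_locales
  have st: "\<forall>r<n. slice_mu n h (r + 1) \<ge> slice_mu n h r + (1 / real n) * slice_infl n h r"
    using step by blast
  have "(1 / real n) * (\<Sum>r<n. slice_infl n h r) = (\<Sum>r<n. (1 / real n) * slice_infl n h r)"
    by (simp add: sum_distrib_left)
  also have "\<dots> \<le> (\<Sum>r<n. slice_mu n h (Suc r) - slice_mu n h r)"
    by (rule sum_mono) (use st in auto)
  also have "\<dots> = slice_mu n h n - slice_mu n h 0" by (rule sum_lessThan_telescope)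
  finally have s2: "(1 / real n) * (\<Sum>r<n. slice_infl n h r) \<le> slice_mu n h n - slice_mu n h 0" .
  have "card {x \<in> slice n n. h x = -1} \<le> card (slice n n)"
    by (rule card_mono[OF finite_slice]) auto
  then have "slice_mu n h n \<le> 1" by (simp add: slice_mu_def card_slice)
  moreover have "slice_mu n h 0 \<ge> 0" by (simp add: slice_mu_def)
  ultimately have "slice_mu n h n - slice_mu n h 0 \<le> 1" by linarith
  then show ?thesis using st s2 by blast
qed

end
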